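(* Let $\lambda \geq 0$, $0 \leq \gamma \leq 1$, $0\leq \beta<1$, $\tau \in \mathbb{C}\setminus\{0\}$ and $m \in \mathbb{N}$. Let $f(z)=z+\sum_{k=1}^{\infty} a_{mk+1}z^{mk+1}$ belong to $\Theta_{\Sigma_m}(\tau,\lambda,\gamma,0;\beta)$ (the case $\delta=0$). Then $$|a_{m+1}| \leq \min\left\{\frac{2|\tau|(1-\beta)}{1+m(\lambda+\gamma)+\lambda\gamma\left((m+1)^2+1\right)},\ 2\sqrt{\frac{|\tau|(1-\beta)}{(m+1)\left(1+2m(\lambda+\gamma)+\lambda\gamma\left((2m+1)^2+1\right)\right)}}\right\}$$ and $$|a_{2m+1}| \leq \frac{2|\tau|(1-\beta)}{1+2m(\lambda+\gamma)+\lambda\gamma\left((2m+1)^2+1\right)}.$$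
   Context: Let $\mathbb{U}=\{z\in\mathbb{C}:|z|<1\}$ and $m\in\mathbb{N}$. $\mathcal{A}_m$ denotes the class of functions analytic in $\mathbb{U}$ of the form $f(z)=z+\sum_{k=1}^{\infty}a_{mk+1}z^{mk+1}$. $\Sigma_m$ denotes the class of $m$-fold symmetric bi-univalent functions: functions $f\in\mathcal{A}_m$ univalent in $\mathbb{U}$ whose inverse $f^{-1}$ extends to a univalent function $g$ on $\mathbb{U}$; this $g$ has the expansion $g(w)=w-a_{m+1}w^{m+1}+\left[(m+1)a_{m+1}^2-a_{2m+1}\right]w^{2m+1}-\cdots$. For $\delta\in\mathbb{N}_0$ and $h(z)=z+\sum_{k\ge1}c_{mk+1}z^{mk+1}$ analytic in $\mathbb{U}$, the $m$-fold Ruscheweyh derivative is $\mathcal{R}^\delta h(z)=z+\sum_{k=1}^{\infty}\frac{\Gamma(\delta+k+1)}{\Gamma(k+1)\Gamma(\delta+1)}c_{mk+1}z^{mk+1}$ (for $\delta=0$ it is the identity). For such $h$ and parameters $\lambda,\gamma,\tau\neq0,\delta$, put $$J_h(z)=1+\frac{1}{\tau}\Big[(1-\lambda)(1-\gamma)\frac{\mathcal{R}^\delta h(z)}{z}+(\lambda(\gamma+1)+\gamma)(\mathcal{R}^\delta h)'(z)+\lambda\gamma\big(z(\mathcal{R}^\delta h)''(z)-2\big)-1\Big].$$ For $0\le\beta<1$, $\Theta_{\Sigma_m}(\tau,\lambda,\gamma,\delta;\beta)$ is the set of $f\in\Sigma_m$ such that $\operatorname{Re}J_f(z)>\beta$ for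 all $z\in\mathbb{U}$ and $\operatorname{Re}J_g(w)>\beta$ for all $w\in\mathbb{U}$, where $g$ is the extension of $f^{-1}$ to $\mathbb{U}$. *)

theory Defs
  imports "HOL-Analysis.Analysis"
begin

abbreviation unit_disc :: "complex set" where
  "unit_disc \<equiv> ball 0 1"

definition mfold_expansion :: "nat \<Rightarrow> (nat \<Rightarrow> complex) \<Rightarrow> (complex \<Rightarrow> complex) \<Rightarrow> bool" where
  "mfold_expansion m a f \<longleftrightarrow>
     (\<forall>z\<in>unit_disc. (\<lambda>k. a (m * Suc k + 1) * z ^ (m * Suc k + 1)) sums (f z - z))"

definition class_A :: "nat \<Rightarrow> (complex \<Rightarrow> complex) \<Rightarrow> bool" where
  "class_A m f \<longleftrightarrow> f holomorphic_on unit_disc \<and> (\<exists>a. mfold_expansion m a f)"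

definition inverse_extension :: "(complex \<Rightarrow> complex) \<Rightarrow> (complex \<Rightarrow> complex) \<Rightarrow> bool" where
  "inverse_extension f g \<longleftrightarrow>
     g holomorphic_on unit_disc \<and> inj_on g unit_disc \<and>
     (\<forall>z\<in>unit_disc. f z \<in> unit_disc \<longrightarrow> g (f z) = z)"

definition Sigma_m :: "nat \<Rightarrow> (complex \<Rightarrow> complex) \<Rightarrow> bool" where
  "Sigma_m m f \<longleftrightarrow> class_A m f \<and> inj_on f unit_disc \<and> (\<exists>g. inverse_extension f g)"

definition taylor_coeff :: "(complex \<Rightarrow> complex) \<Rightarrow> nat \<Rightarrow> complex" where
  "taylor_coeff h n = (deriv ^^ n) h 0 / of_nat (fact n)"

text \<open>m-fold Ruscheweyh derivative; for \<delta> = 0 it is the identity (as stipulated).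
  Gamma(\<delta>+k+1)/(Gamma(k+1) Gamma(\<delta>+1)) = (\<delta>+k choose k).\<close>
definition ruscheweyh :: "nat \<Rightarrow> nat \<Rightarrow> (complex \<Rightarrow> complex) \<Rightarrow> complex \<Rightarrow> complex" where
  "ruscheweyh m \<delta> h =
     (if \<delta> = 0 then h
      else (\<lambda>z. z + (\<Sum>k. of_nat ((\<delta> + Suc k) choose Suc k) * taylor_coeff h (m * Suc k + 1)
                            * z ^ (m * Suc k + 1))))"

text \<open>h(z)/z, with its removable value h'(0) at z = 0.\<close>
definition div_z :: "(complex \<Rightarrow> complex) \<Rightarrow> complex \<Rightarrow> complex" where
  "div_z h z = (if z = 0 then deriv h 0 else h z / z)"

definition J_fun :: "nat \<Rightarrow> complex \<Rightarrow> real \<Rightarrow> real \<Rightarrow> nat \<Rightarrow> (complex \<Rightarrow> complex) \<Rightarrow> complex \<Rightarrow> complex" where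
  "J_fun m \<tau> lam \<gamma> \<delta> h z =
     (let R = ruscheweyh m \<delta> h in
      1 + (1 / \<tau>) * (of_real ((1 - lam) * (1 - \<gamma>)) * div_z R z
                     + of_real (lam * (\<gamma> + 1) + \<gamma>) * deriv R z
                     + of_real (lam * \<gamma>) * (z * deriv (deriv R) z - 2) - 1))"

definition Theta :: "nat \<Rightarrow> complex \<Rightarrow> real \<Rightarrow> real \<Rightarrow> nat \<Rightarrow> real \<Rightarrow> (complex \<Rightarrow> complex) \<Rightarrow> bool" where
  "Theta m \<tau> lam \<gamma> \<delta> \<beta> f \<longleftrightarrow>
     class_A m f \<and> inj_on f unit_disc \<and>
     (\<exists>g. inverse_extension f g \<and>
          (\<forall>z\<in>unit_disc. Re (J_fun m \<tau> lam \<gamma> \<delta> f z) > \<beta>) \<and>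
          (\<forall>w\<in>unit_disc. Re (J_fun m \<tau> lam \<gamma> \<delta> g w) > \<beta>))"

end

theory Submission
  imports Defs "HOL-Complex_Analysis.Complex_Analysis"
begin

unbundle no vec_syntax




definition lowvan :: "complex fps \<Rightarrow> nat \<Rightarrow> bool" where
  "lowvan A k \<longleftrightarrow> (\<forall>j<k. A $ j = 0)"

lemma lowvan_mono: "lowvan A k \<Longrightarrow> l \<le> k \<Longrightarrow> lowvan A l"
  by (auto simp: lowvan_def)

lemma lowvan_add: "lowvan A k \<Longrightarrow> lowvan B k \<Longrightarrow> lowvan (A + B) k"
  by (auto simp: lowvan_def)

lemma lowvan_diff: "lowvan A k \<Longrightarrow> lowvan B k \<Longrightarrow> lowvan (A - B) k"
  by (auto simp: lowvan_def)

lemma lowvan_uminus: "lowvan A k \<Longrightarrow> lowvan (- A) k"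
  by (auto simp: lowvan_def)

lemma lowvan_zero: "lowvan 0 k"
  by (auto simp: lowvan_def)

lemma lowvan_mult: "lowvan A k \<Longrightarrow> lowvan B l \<Longrightarrow> lowvan (A * B) (k + l)"
  unfolding lowvan_def
proof (intro allI impI)
  fix j assume A: "\<forall>j<k. A $ j = 0" and B: "\<forall>j<l. B $ j = 0" and j: "j < k + l"
  have "(A * B) $ j = (\<Sum>i=0..j. A$i * B$(j - i))" by (rule fps_mult_nth)
  also have "\<dots> = 0"
  proof (rule sum.neutral, intro ballI)
    fix i assume "i \<in> {0..j}"
    show "A$i * B$(j - i) = 0"
    proof (cases "i < k")
      case True then show ?thesis using A by simp
    next
      case False then have "j - i < l" using j \<open>i \<in> {0..j}\<close> by auto
      then show ?thesis using B by simp
    qed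
  qed
  finally show "(A * B) $ j = 0" .
qed

lemma lowvan_any: "lowvan A 0"
  by (simp add: lowvan_def)

lemma lowvan_mult_left: "lowvan B l \<Longrightarrow> lowvan (A * B) l"
  using lowvan_mult[OF lowvan_any[of A], of B l] by simp

lemma lowvan_mult_right: "lowvan A l \<Longrightarrow> lowvan (A * B) l"
  using lowvan_mult[OF _ lowvan_any[of B], of A l] by simp

lemma lowvan_X_power: "lowvan (fps_X ^ n) n"
  by (auto simp: lowvan_def fps_X_power_iff)

lemma lowvan_power: "lowvan A k \<Longrightarrow> lowvan (A ^ n) (n * k)"
proof (induction n)
  case 0 then show ?case by (simp add: lowvan_def)
next
  case (Suc n)
  then show ?case using lowvan_mult[of A k "A ^ n" "n * k"] by (simp add: add.commute)
qed

lemma lowvan_compose: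
  assumes "lowvan A k" "F $ 0 = 0"
  shows "lowvan (A oo F) k"
  unfolding lowvan_def
proof (intro allI impI)
  fix j assume j: "j < k"
  have "(A oo F) $ j = (\<Sum>i=0..j. A$i * (F^i$j))" by (rule fps_compose_nth)
  also have "\<dots> = 0" using assms j by (intro sum.neutral) (auto simp: lowvan_def)
  finally show "(A oo F) $ j = 0" .
qed

lemma power_diag_nth:
  fixes F :: "complex fps"
  assumes "F $ 0 = 0"
  shows "(F ^ j) $ j = (F $ 1) ^ j"
proof (induction j)
  case 0 then show ?case by simp
next
  case (Suc j)
  have F1: "lowvan F 1" using assms by (simp add: lowvan_def)
  have "(F ^ Suc j) $ Suc j = (F * F ^ j) $ Suc j" by simp
  also have "\<dots> = (\<Sum>i=0..Suc j. F$i * (F^j)$(Suc j - i))" by (rule fps_mult_nth)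
  also have "\<dots> = (\<Sum>i\<in>{1}. F$i * (F^j)$(Suc j - i))"
  proof (rule sum.mono_neutral_right)
    show "\<forall>i\<in>{0..Suc j} - {1}. F $ i * (F ^ j) $ (Suc j - i) = 0"
    proof
      fix i assume i: "i \<in> {0..Suc j} - {1}"
      show "F $ i * (F ^ j) $ (Suc j - i) = 0"
      proof (cases "i = 0")
        case True then show ?thesis using assms by simp
      next
        case False
        then have "Suc j - i < j" using i by auto
        then show ?thesis using lowvan_power[OF F1, of j] by (simp add: lowvan_def)
      qed
    qed
  qed auto
  also have "\<dots> = F $ 1 * (F ^ j) $ j" by simp
  finally show ?case using Suc by simp
qed

lemma lowvan_compose_cancel:
  fixes F D :: "complex fps"
  assumes "F $ 0 = 0" "F $ 1 \<noteq> 0" "lowvan (D oo F) k"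
  shows "lowvan D k"
  unfolding lowvan_def
proof (intro allI impI)
  fix j assume "j < k"
  then show "D $ j = 0"
  proof (induction j rule: less_induct)
    case (less j)
    have F1: "lowvan F 1" using assms by (simp add: lowvan_def)
    have "(D oo F) $ j = (\<Sum>i=0..j. D$i * (F^i$j))" by (rule fps_compose_nth)
    also have "\<dots> = (\<Sum>i\<in>{j}. D$i * (F^i$j))"
    proof (rule sum.mono_neutral_right)
      show "\<forall>i\<in>{0..j} - {j}. D $ i * (F ^ i) $ j = 0"
        using less by auto
    qed auto
    also have "\<dots> = D $ j * (F $ 1) ^ j" using power_diag_nth[OF assms(1)] by simp
    finally have "D $ j * (F $ 1) ^ j = 0" using assms(3) less.prems by (simp add: lowvan_def)
    then show ?case using assms(2) by simp
  qed
qed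

lemma binom_aux:
  fixes X E :: "'a::comm_ring_1"
  shows "\<exists>S. (X + E) ^ Suc n = X ^ Suc n + of_nat (Suc n) * X ^ n * E + E^2 * S"
proof (induction n)
  case 0 then show ?case by (intro exI[of _ 0]) simp
next
  case (Suc n)
  then obtain S where S: "(X + E) ^ Suc n = X ^ Suc n + of_nat (Suc n) * X ^ n * E + E^2 * S" by blast
  show ?case
    by (intro exI[of _ "of_nat (Suc n) * X ^ n + S * (X + E)"])
       (simp only: power_Suc[of "X + E" "Suc n"] S, simp add: algebra_simps power2_eq_square)
qed

lemma ring_identity:
  fixes x f e y A1 A2 C N1 N2 P1 P2 S S' :: "'a::comm_ring_1"
  assumes "f = x + e"
    "P1 = y * x + N1 * y * e + e^2 * S" "P2 = y^2 * x + N2 * y^2 * e + e^2 * S'"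
    "C = N1 * A1^2 - A2"
  shows "x - (f - A1 * P1 + C * P2) =
     - (e - A1 * y * x - A2 * y^2 * x) + N1 * A1 * (y * (A2 * y^2 * x + (e - A1 * y * x - A2 * y^2 * x)))
     + A1 * (e^2 * S) - C * N2 * (y^2 * e) - C * (e^2 * S')"
  unfolding assms by (simp add: algebra_simps power2_eq_square)

lemma inverse_coeffs:
  fixes F G :: "complex fps" and a1 a2 :: complex and m :: nat
  assumes m: "m \<ge> 1" and GF: "G oo F = fps_X" and F0: "F $ 0 = 0"
    and FR: "lowvan (F - (fps_X + fps_const a1 * fps_X^(m+1) + fps_const a2 * fps_X^(2*m+1))) (2*m+2)"
  shows "lowvan (G - (fps_X - fps_const a1 * fps_X^(m+1)
            + fps_const (of_nat (m+1) * a1^2 - a2) * fps_X^(2*m+1))) (2*m+2)"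
proof -
  define X :: "complex fps" where "X = fps_X"
  define y where "y = X ^ m"
  define A1 where "A1 = fps_const a1"
  define A2 where "A2 = fps_const a2"
  define C where "C = fps_const (of_nat (m+1) * a1^2 - a2)"
  define H where "H = X - A1 * X^(m+1) + C * X^(2*m+1)"
  define e where "e = F - X"
  define r where "r = e - A1 * y * X - A2 * y^2 * X"
  have Xm1: "X^(m+1) = y * X" by (simp add: y_def)
  have X2m1: "X^(2*m+1) = y^2 * X" by (simp add: y_def power_mult[symmetric] mult.commute)
  have X2m: "X^(2*m) = y^2" by (simp add: y_def power_mult[symmetric] mult.commute)
  have "r = F - (X + A1 * X^(m+1) + A2 * X^(2*m+1))"
    unfolding Xm1 X2m1 r_def e_def by (simp add: algebra_simps)
  then have lr: "lowvan r (2*m+2)" using FR by (simp add: X_def A1_def A2_def)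
  have ly: "lowvan y m" by (simp add: y_def X_def lowvan_X_power)
  have lX: "lowvan X 1" using lowvan_X_power[of 1] by (simp add: X_def)
  have lyX: "lowvan (y * X) (m+1)" using lowvan_mult[OF ly lX] .
  have ly2: "lowvan (y^2) (2*m)" using lowvan_power[OF ly, of 2] by simp
  have ly2X: "lowvan (y^2 * X) (2*m+1)" using lowvan_mult[OF ly2 lX] .
  have le: "lowvan e (m+1)"
  proof -
    have "e = A1 * (y * X) + A2 * (y^2 * X) + r" by (simp add: r_def algebra_simps)
    moreover have "lowvan (A1 * (y * X)) (m+1)" by (rule lowvan_mult_left[OF lyX])
    moreover have "lowvan (A2 * (y^2 * X)) (m+1)"
      by (rule lowvan_mono[OF lowvan_mult_left[OF ly2X]]) simp
    moreover have "lowvan r (m+1)" by (rule lowvan_mono[OF lr]) simp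
    ultimately show ?thesis by (simp add: lowvan_add)
  qed
  have le2: "lowvan (e^2) (2*m+2)" using lowvan_power[OF le, of 2] by simp
  obtain S where S: "(X + e) ^ Suc m = X ^ Suc m + of_nat (Suc m) * X ^ m * e + e^2 * S"
    using binom_aux by blast
  obtain S' where S': "(X + e) ^ Suc (2*m) = X ^ Suc (2*m) + of_nat (Suc (2*m)) * X ^ (2*m) * e + e^2 * S'"
    using binom_aux by blast
  have Fe: "F = X + e" by (simp add: e_def)
  have HF: "H oo F = F - A1 * F^(m+1) + C * F^(2*m+1)"
  proof -
    have c1: "fps_X^(m+1) oo F = F^(m+1)" "fps_X^(2*m+1) oo F = F^(2*m+1)" "fps_X oo F = F"
      using fps_X_power_compose[OF F0, of "m+1"] fps_X_power_compose[OF F0, of "2*m+1"]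
        fps_X_power_compose[OF F0, of 1] by simp_all
    show ?thesis unfolding H_def A1_def C_def X_def
      by (simp only: fps_compose_add_distrib fps_compose_sub_distrib
        fps_const_mult_apply_left[symmetric] c1)
  qed
  have P1: "F^(m+1) = y * X + of_nat (m+1) * y * e + e^2 * S"
    using S by (simp add: Fe y_def mult.commute)
  have P2: "F^(2*m+1) = y^2 * X + of_nat (2*m+1) * y^2 * e + e^2 * S'"
    using S' X2m X2m1 by (simp add: Fe)
  have CC: "C = of_nat (m+1) * A1^2 - A2"
    by (simp only: C_def A1_def A2_def fps_of_nat[symmetric] fps_const_power fps_const_mult fps_const_sub)
  have id: "X - (H oo F) = - r + of_nat (m+1) * A1 * (y * (A2 * y^2 * X + r)) + A1 * (e^2 * S)
       - C * of_nat (2*m+1) * (y^2 * e) - C * (e^2 * S')"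
    unfolding HF r_def by (rule ring_identity[OF Fe P1 P2 CC])
  have t2: "lowvan (y * (A2 * y^2 * X + r)) (2*m+2)"
  proof -
    have "lowvan (A2 * y^2 * X + r) (2*m+1)"
      using lowvan_mult_left[OF ly2X, of A2] lowvan_mono[OF lr, of "2*m+1"]
      by (simp add: lowvan_add mult.assoc)
    from lowvan_mult[OF ly this] show ?thesis by (rule lowvan_mono) (use m in simp)
  qed
  have t4: "lowvan (y^2 * e) (2*m+2)"
    using lowvan_mult[OF ly2 le] by (rule lowvan_mono) (use m in simp)
  have "lowvan (X - (H oo F)) (2*m+2)"
    unfolding id
    by (intro lowvan_add lowvan_diff lowvan_uminus lr lowvan_mult_left[OF t2]
        lowvan_mult_left[OF t4] lowvan_mult_left[OF lowvan_mult_right[OF le2]])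
  then have "lowvan ((G - H) oo F) (2*m+2)"
    by (simp add: fps_compose_sub_distrib GF X_def)
  moreover have "F $ 1 = 1"
  proof -
    have "(F - (fps_X + fps_const a1 * fps_X^(m+1) + fps_const a2 * fps_X^(2*m+1))) $ 1 = 0"
      using FR m by (simp add: lowvan_def)
    then show ?thesis using m by (simp add: fps_X_power_iff)
  qed
  ultimately have "lowvan (G - H) (2*m+2)"
    using lowvan_compose_cancel[OF F0] by simp
  then show ?thesis by (simp add: H_def X_def A1_def C_def)
qed





lemma re_pos_mobius:
  fixes u :: complex assumes "Re u > 0"
  shows "cmod (u - 1) < cmod (u + 1)"
proof -
  have "cmod (u - 1) ^ 2 < cmod (u + 1) ^ 2"
    using assms unfolding cmod_power2 by (simp add: power2_eq_square algebra_simps)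
  then show ?thesis by (rule power_less_imp_less_base) simp
qed

lemma le_one_from_interval:
  fixes x :: real and n :: nat
  assumes "n \<ge> 1" and "\<And>r. 0 < r \<Longrightarrow> r < 1 \<Longrightarrow> x \<le> 1 / r ^ n"
  shows "x \<le> 1"
proof (rule field_le_mult_one_interval)
  fix z :: real assume z: "0 < z" "z < 1"
  define r where "r = root n z"
  have r: "0 < r" "r < 1" using z assms(1) by (auto simp: r_def real_root_lt_1_iff)
  have rn: "r ^ n = z" using z assms(1) by (simp add: r_def)
  have "x \<le> 1 / z" using assms(2)[OF r] rn by simp
  then show "z * x \<le> 1" using z by (simp add: field_simps)
qed

lemma carath1:
  fixes p :: "complex \<Rightarrow> complex" and P :: "complex fps" and n :: nat
  assumes hol: "p holomorphic_on ball 0 1" and re: "\<forall>z\<in>ball 0 1. Re (p z) > 0"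
    and exp: "p has_fps_expansion P" and lv: "lowvan (P - 1) n" and n: "n \<ge> 1"
  shows "cmod (P $ n) \<le> 2"
proof -
  define w where "w = (\<lambda>z. (p z - 1) / (p z + 1))"
  have nz: "p z + 1 \<noteq> 0" if "z \<in> ball 0 1" for z
  proof -
    have "Re (p z) > 0" using re that by blast
    then have "Re (p z + 1) > 0" by simp
    then show ?thesis by (metis zero_complex.sel(1) less_irrefl)
  qed
  have holw: "w holomorphic_on ball 0 1"
    unfolding w_def using hol nz by (intro holomorphic_intros) auto
  have bound: "cmod (w z) \<le> 1" if "z \<in> ball 0 1" for z
  proof -
    have "cmod (p z - 1) < cmod (p z + 1)" using re that by (intro re_pos_mobius) auto
    then show ?thesis using nz[OF that] by (simp add: w_def norm_divide divide_le_eq_1)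
  qed
  have P0: "P $ 0 = 1"
    using lv n by (auto simp: lowvan_def)
  have wexp: "w has_fps_expansion (P - 1) / (P + 1)"
    unfolding w_def by (intro has_fps_expansion_divide' has_fps_expansion_diff has_fps_expansion_add exp
        has_fps_expansion_1) (simp add: P0)
  have coeff: "((P - 1) / (P + 1)) $ n = P $ n / 2"
  proof -
    have a: "(P + 1) $ 0 = 2" by (simp add: P0)
    have "((P - 1) / (P + 1)) $ n = ((P - 1) * inverse (P + 1)) $ n"
      using a by (subst fps_divide_unit) simp_all
    also have "\<dots> = (\<Sum>i=0..n. (P - 1)$i * (inverse (P + 1))$(n - i))" by (rule fps_mult_nth)
    also have "\<dots> = (\<Sum>i\<in>{n}. (P - 1)$i * (inverse (P + 1))$(n - i))"
    proof (rule sum.mono_neutral_right)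
      show "\<forall>i\<in>{0..n} - {n}. (P - 1) $ i * inverse (P + 1) $ (n - i) = 0"
      proof
        fix i assume "i \<in> {0..n} - {n}"
        then have "i < n" by auto
        then have "(P - 1) $ i = 0" using lv unfolding lowvan_def by blast
        then show "(P - 1) $ i * inverse (P + 1) $ (n - i) = 0" by (simp only: mult_zero_left)
      qed
    qed auto
    also have "\<dots> = (P - 1) $ n * inverse ((P + 1) $ 0)" by simp
    also have "(P - 1) $ n = P $ n" using n by simp
    also have "inverse ((P + 1) $ 0) = inverse 2" using a by simp
    finally show ?thesis by (simp only: divide_inverse)
  qed
  have "cmod (P $ n) / 2 \<le> 1"
  proof (rule le_one_from_interval[OF n])
    fix r :: real assume r: "0 < r" "r < 1"
    have "norm ((deriv ^^ n) w 0) \<le> fact n * 1 / r ^ n"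
    proof (rule Cauchy_inequality)
      show "w holomorphic_on ball 0 r" using r by (intro holomorphic_on_subset[OF holw]) auto
      show "continuous_on (cball 0 r) w"
        using holw r by (intro holomorphic_on_imp_continuous_on holomorphic_on_subset[OF holw]) auto
      show "cmod (w x) \<le> 1" if "cmod (0 - x) = r" for x
        using that r by (intro bound) auto
    qed (use r in auto)
    moreover have "P $ n / 2 = (deriv ^^ n) w 0 / fact n"
      using fps_nth_fps_expansion[OF wexp, of n] coeff by simp
    ultimately have "cmod (P $ n) / 2 = cmod ((deriv ^^ n) w 0) / fact n"
      by (metis norm_divide norm_fact norm_numeral)
    also have "\<dots> \<le> (fact n * 1 / r ^ n) / fact n"
      by (intro divide_right_mono \<open>norm ((deriv ^^ n) w 0) \<le> fact n * 1 / r ^ n\<close>) simp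
    also have "\<dots> = 1 / r ^ n" by simp
    finally show "cmod (P $ n) / 2 \<le> 1 / r ^ n" .
  qed
  then show ?thesis by simp
qed

lemma carath2:
  fixes p :: "complex \<Rightarrow> complex" and P :: "complex fps" and m :: nat
  assumes hol: "p holomorphic_on ball 0 1" and re: "\<forall>z\<in>ball 0 1. Re (p z) > 0"
    and exp: "p has_fps_expansion P" and P0: "P $ 0 = 1" and m: "m \<ge> 1"
    and vz: "\<And>j. 1 \<le> j \<Longrightarrow> j < 2*m \<Longrightarrow> j \<noteq> m \<Longrightarrow> P $ j = 0"
  shows "cmod (P $ (2*m)) \<le> 2"
proof -
  define \<zeta> :: complex where "\<zeta> = exp (of_real (pi / real m) * \<i>)"
  have zm: "\<zeta> ^ m = -1"
  proof -
    have "\<zeta> ^ m = exp (of_nat m * (of_real (pi / real m) * \<i>))"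
      unfolding \<zeta>_def by (rule exp_of_nat_mult[symmetric])
    also have "of_nat m * (of_real (pi / real m) * \<i>) = of_real pi * \<i>" using m by simp
    also have "exp (of_real pi * \<i>) = -1" by (simp add: exp_Euler cos_of_real sin_of_real)
    finally show ?thesis .
  qed
  have z2m: "\<zeta> ^ (2*m) = 1" using zm by (simp add: power_mult[symmetric] mult.commute[of 2 m] power_mult)
  have nz: "cmod \<zeta> = 1" unfolding \<zeta>_def by simp
  define q where "q = (\<lambda>z. (1/2) * (p z + p (\<zeta> * z)))"
  define Q where "Q = fps_const (1/2) * (P + (P oo (fps_const \<zeta> * fps_X)))"
  have inball: "\<zeta> * z \<in> ball 0 1" if "z \<in> ball 0 1" for z
    using that nz by (simp add: norm_mult)
  have holq: "q holomorphic_on ball 0 1"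
    unfolding q_def
    by (intro holomorphic_intros hol holomorphic_on_compose_gen[OF _ hol, unfolded o_def]) (use inball in auto)
  have req: "\<forall>z\<in>ball 0 1. Re (q z) > 0"
  proof
    fix z :: complex assume z: "z \<in> ball 0 1"
    have "Re (p z) > 0" "Re (p (\<zeta> * z)) > 0" using re z inball[OF z] by blast+
    then show "Re (q z) > 0" by (simp add: q_def)
  qed
  have e2: "(\<lambda>z. \<zeta> * z) has_fps_expansion fps_const \<zeta> * fps_X"
    using has_fps_expansion_cmult_left[OF has_fps_expansion_fps_X, of \<zeta>] by simp
  have e3: "(p \<circ> (\<lambda>z. \<zeta> * z)) has_fps_expansion (P oo (fps_const \<zeta> * fps_X))"
    by (rule has_fps_expansion_compose[OF exp e2]) simp
  have expq: "q has_fps_expansion Q"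
    unfolding q_def Q_def using e3 unfolding o_def
    by (intro has_fps_expansion_cmult_left has_fps_expansion_add exp)
  have Qn: "Q $ j = (1/2) * (P $ j + \<zeta> ^ j * P $ j)" for j
    by (simp add: Q_def fps_compose_linear)
  have "lowvan (Q - 1) (2*m)"
    unfolding lowvan_def
  proof (intro allI impI)
    fix j assume j: "j < 2*m"
    show "(Q - 1) $ j = 0"
    proof (cases "j = 0")
      case True then show ?thesis by (simp add: Qn P0)
    next
      case False
      then have "(Q - 1) $ j = Q $ j" by simp
      also have "\<dots> = 0"
      proof (cases "j = m")
        case True then show ?thesis by (simp add: Qn zm)
      next
        case False
        then show ?thesis using vz[of j] \<open>j \<noteq> 0\<close> j by (simp add: Qn)
      qed
      finally show ?thesis .
    qed
  qed
  from carath1[OF holq req expq this] m have "cmod (Q $ (2*m)) \<le> 2" by simp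
  moreover have "Q $ (2*m) = P $ (2*m)" by (simp add: Qn z2m)
  ultimately show ?thesis by simp
qed





definition cc :: "real \<Rightarrow> real \<Rightarrow> nat \<Rightarrow> real" where
  "cc lam \<gamma> j = (1 - lam) * (1 - \<gamma>) + (lam * (\<gamma> + 1) + \<gamma>) * (real j + 1) + lam * \<gamma> * real j * (real j + 1)"

definition JQ :: "complex \<Rightarrow> real \<Rightarrow> real \<Rightarrow> complex fps \<Rightarrow> complex fps" where
  "JQ \<tau> lam \<gamma> H = 1 + fps_const (1 / \<tau>) * (fps_const (of_real ((1 - lam) * (1 - \<gamma>))) * fps_shift 1 H
       + fps_const (of_real (lam * (\<gamma> + 1) + \<gamma>)) * fps_deriv H
       + fps_const (of_real (lam * \<gamma>)) * (fps_X * fps_deriv (fps_deriv H) - 2) - 1)"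

lemma JQ_0:
  assumes "H $ 1 = 1"
  shows "JQ \<tau> lam \<gamma> H $ 0 = 1"
proof -
  have "JQ \<tau> lam \<gamma> H $ 0 = 1 + (1 / \<tau>) * (of_real ((1 - lam) * (1 - \<gamma>)) + of_real (lam * (\<gamma> + 1) + \<gamma>)
        + of_real (lam * \<gamma>) * (- 2) - 1)"
    using assms by (simp add: JQ_def)
  also have "of_real ((1 - lam) * (1 - \<gamma>)) + of_real (lam * (\<gamma> + 1) + \<gamma>) + of_real (lam * \<gamma>) * (- 2) - 1
       = (of_real ((1 - lam) * (1 - \<gamma>) + (lam * (\<gamma> + 1) + \<gamma>) + (lam * \<gamma>) * (- 2) - 1) :: complex)"
    by simp
  also have "(1 - lam) * (1 - \<gamma>) + (lam * (\<gamma> + 1) + \<gamma>) + (lam * \<gamma>) * (- 2) - 1 = 0"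
    by (simp add: algebra_simps)
  finally show ?thesis by simp
qed

lemma JQ_Suc:
  "JQ \<tau> lam \<gamma> H $ Suc k = of_real (cc lam \<gamma> (Suc k)) * H $ (Suc (Suc k)) / \<tau>"
proof -
  have "JQ \<tau> lam \<gamma> H $ Suc k = (1 / \<tau>) * (of_real ((1 - lam) * (1 - \<gamma>)) * H $ (Suc (Suc k))
      + of_real (lam * (\<gamma> + 1) + \<gamma>) * (of_nat (Suc (Suc k)) * H $ (Suc (Suc k)))
      + of_real (lam * \<gamma>) * (of_nat (Suc k) * (of_nat (Suc (Suc k)) * H $ (Suc (Suc k)))))"
    by (simp add: JQ_def fps_numeral_nth)
  also have "\<dots> = (1 / \<tau>) * (of_real ((1 - lam) * (1 - \<gamma>) + (lam * (\<gamma> + 1) + \<gamma>) * real (Suc (Suc k))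
       + lam * \<gamma> * (real (Suc k) * real (Suc (Suc k)))) * H $ (Suc (Suc k)))"
    by (simp add: algebra_simps)
  also have "(1 - lam) * (1 - \<gamma>) + (lam * (\<gamma> + 1) + \<gamma>) * real (Suc (Suc k))
       + lam * \<gamma> * (real (Suc k) * real (Suc (Suc k))) = cc lam \<gamma> (Suc k)"
    by (simp add: cc_def algebra_simps)
  finally show ?thesis by simp
qed

lemma div_z_expansion:
  fixes h :: "complex \<Rightarrow> complex"
  assumes exph: "h has_fps_expansion H" and H0: "H $ 0 = 0" and H1: "H $ 1 = 1"
  shows "div_z h has_fps_expansion fps_shift 1 H"
proof -
  have d: "deriv h 0 = H $ 1" using fps_nth_fps_expansion[OF exph, of 1] by simp
  have "H \<noteq> 0" using H1 by auto
  then have sd: "1 \<le> subdegree H" using H0 by (intro subdegree_geI) auto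
  have "(\<lambda>x. if x = 0 then H $ 1 else h x / x ^ 1) has_fps_expansion fps_shift 1 H"
    by (rule has_fps_expansion_shift[OF exph sd refl])
  also have "(\<lambda>x. if x = 0 then H $ 1 else h x / x ^ 1) = div_z h"
    by (auto simp: div_z_def d)
  finally show ?thesis .
qed

lemma div_z_holo:
  fixes h :: "complex \<Rightarrow> complex"
  assumes holh: "h holomorphic_on ball 0 1" and exph: "h has_fps_expansion H" and H0: "H $ 0 = 0" and H1: "H $ 1 = 1"
  shows "div_z h holomorphic_on ball 0 1"
proof (rule no_isolated_singularity'[where K = "{0}"])
  have "continuous (at 0 within ball 0 1) (div_z h)"
    by (rule has_fps_expansion_imp_continuous[OF div_z_expansion[OF exph H0 H1]])
  then show "\<And>z. z \<in> {0} \<Longrightarrow> (div_z h \<longlongrightarrow> div_z h z) (at z within ball 0 1)"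
    by (auto simp: continuous_within)
  have "(\<lambda>z. h z / z) holomorphic_on (ball 0 1 - {0})"
    by (intro holomorphic_intros holomorphic_on_subset[OF holh]) auto
  then show "div_z h holomorphic_on (ball 0 1 - {0})"
    by (rule holomorphic_transform) (auto simp: div_z_def)
qed auto

lemma J_unfold:
  "J_fun m \<tau> lam \<gamma> 0 h = (\<lambda>z. 1 + (1 / \<tau>) * (of_real ((1 - lam) * (1 - \<gamma>)) * div_z h z
                     + of_real (lam * (\<gamma> + 1) + \<gamma>) * deriv h z
                     + of_real (lam * \<gamma>) * (z * deriv (deriv h) z - 2) - 1))"
  by (simp add: J_fun_def ruscheweyh_def Let_def fun_eq_iff)

lemma J_expansion:
  fixes h :: "complex \<Rightarrow> complex"
  assumes holh: "h holomorphic_on ball 0 1" and exph: "h has_fps_expansion H" and H0: "H $ 0 = 0" and H1: "H $ 1 = 1"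
  shows "J_fun m \<tau> lam \<gamma> 0 h holomorphic_on ball 0 1"
    and "J_fun m \<tau> lam \<gamma> 0 h has_fps_expansion JQ \<tau> lam \<gamma> H"
proof -
  show "J_fun m \<tau> lam \<gamma> 0 h holomorphic_on ball 0 1"
    unfolding J_unfold
    by (intro holomorphic_intros div_z_holo[OF holh exph H0 H1] holomorphic_deriv holh) auto
  show "J_fun m \<tau> lam \<gamma> 0 h has_fps_expansion JQ \<tau> lam \<gamma> H"
    unfolding J_unfold JQ_def
    by (intro has_fps_expansion_add has_fps_expansion_cmult_left has_fps_expansion_diff
         has_fps_expansion_mult has_fps_expansion_deriv has_fps_expansion_fps_X has_fps_expansion_1
         has_fps_expansion_numeral div_z_expansion[OF exph H0 H1] exph)
qed





lemma p_setup:
  fixes h :: "complex \<Rightarrow> complex" and \<beta> :: real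
  assumes holh: "h holomorphic_on ball 0 1" and exph: "h has_fps_expansion H" and H0: "H $ 0 = 0" and H1: "H $ 1 = 1"
    and ReJ: "\<forall>z\<in>ball 0 1. Re (J_fun m \<tau> lam \<gamma> 0 h z) > \<beta>" and b: "\<beta> < 1"
  defines "p \<equiv> (\<lambda>z. of_real (1 / (1 - \<beta>)) * (J_fun m \<tau> lam \<gamma> 0 h z - of_real \<beta>))"
  defines "P \<equiv> fps_const (of_real (1 / (1 - \<beta>))) * (JQ \<tau> lam \<gamma> H - fps_const (of_real \<beta>))"
  shows "p holomorphic_on ball 0 1" "\<forall>z\<in>ball 0 1. Re (p z) > 0" "p has_fps_expansion P"
    "P $ 0 = 1" "\<And>j. j \<ge> 1 \<Longrightarrow> P $ j = of_real (1 / (1 - \<beta>)) * (of_real (cc lam \<gamma> j) * H $ (Suc j) / \<tau>)"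
proof -
  show "p holomorphic_on ball 0 1" unfolding p_def
    by (intro holomorphic_intros J_expansion(1)[OF holh exph H0 H1])
  show "\<forall>z\<in>ball 0 1. Re (p z) > 0"
  proof
    fix z :: complex assume "z \<in> ball 0 1"
    then have "Re (J_fun m \<tau> lam \<gamma> 0 h z) > \<beta>" using ReJ by blast
    then show "Re (p z) > 0" using b by (simp add: p_def)
  qed
  show "p has_fps_expansion P" unfolding p_def P_def
    by (intro has_fps_expansion_cmult_left has_fps_expansion_diff J_expansion(2)[OF holh exph H0 H1]
        has_fps_expansion_const)
  show "P $ 0 = 1" using b by (simp add: P_def JQ_0[OF H1] field_simps)
  show "P $ j = of_real (1 / (1 - \<beta>)) * (of_real (cc lam \<gamma> j) * H $ (Suc j) / \<tau>)" if j1: "j \<ge> 1" for j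
  proof -
    obtain k where k: "j = Suc k" using j1 by (cases j) auto
    show ?thesis unfolding k P_def by (simp add: JQ_Suc)
  qed
qed

lemma scale_bound:
  fixes X :: complex and \<beta> :: real
  assumes "cmod (of_real (1 / (1 - \<beta>)) * X) \<le> 2" "\<beta> < 1"
  shows "cmod X \<le> 2 * (1 - \<beta>)"
proof -
  have "cmod (of_real (1 / (1 - \<beta>)) * X) = cmod X / (1 - \<beta>)"
    using assms(2) by (simp only: norm_mult norm_of_real) simp
  then have "cmod X / (1 - \<beta>) \<le> 2" using assms(1) by simp
  then show ?thesis using assms(2) by (simp add: pos_divide_le_eq mult.commute)
qed

lemma K1:
  fixes h :: "complex \<Rightarrow> complex" and \<beta> :: real
  assumes holh: "h holomorphic_on ball 0 1" and exph: "h has_fps_expansion H" and H0: "H $ 0 = 0" and H1: "H $ 1 = 1"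
    and ReJ: "\<forall>z\<in>ball 0 1. Re (J_fun m \<tau> lam \<gamma> 0 h z) > \<beta>" and b: "\<beta> < 1"
    and n: "n \<ge> 1" and vz: "\<And>j. 1 \<le> j \<Longrightarrow> j < n \<Longrightarrow> H $ (Suc j) = 0"
  shows "cmod (of_real (cc lam \<gamma> n) * H $ (Suc n) / \<tau>) \<le> 2 * (1 - \<beta>)"
proof -
  note S = p_setup[OF holh exph H0 H1 ReJ b]
  define P where "P = fps_const (of_real (1 / (1 - \<beta>))) * (JQ \<tau> lam \<gamma> H - fps_const (of_real \<beta>))"
  have "lowvan (P - 1) n"
    unfolding lowvan_def
  proof (intro allI impI)
    fix j assume "j < n"
    show "(P - 1) $ j = 0"
    proof (cases "j = 0")
      case True then show ?thesis using S(4) by (simp add: P_def)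
    next
      case False
      then show ?thesis using S(5)[of j] vz[of j] \<open>j < n\<close> by (simp add: P_def)
    qed
  qed
  from carath1[OF S(1,2) S(3)[folded P_def] this n]
  have "cmod (P $ n) \<le> 2" .
  then have "cmod (of_real (1 / (1 - \<beta>)) * (of_real (cc lam \<gamma> n) * H $ (Suc n) / \<tau>)) \<le> 2"
    using S(5)[OF n] by (simp add: P_def)
  then show ?thesis using b by (rule scale_bound)
qed

lemma K2:
  fixes h :: "complex \<Rightarrow> complex" and \<beta> :: real
  assumes holh: "h holomorphic_on ball 0 1" and exph: "h has_fps_expansion H" and H0: "H $ 0 = 0" and H1: "H $ 1 = 1"
    and ReJ: "\<forall>z\<in>ball 0 1. Re (J_fun m \<tau> lam \<gamma> 0 h z) > \<beta>" and b: "\<beta> < 1"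
    and m: "m \<ge> 1" and vz: "\<And>j. 1 \<le> j \<Longrightarrow> j < 2*m \<Longrightarrow> j \<noteq> m \<Longrightarrow> H $ (Suc j) = 0"
  shows "cmod (of_real (cc lam \<gamma> (2*m)) * H $ (Suc (2*m)) / \<tau>) \<le> 2 * (1 - \<beta>)"
proof -
  note S = p_setup[OF holh exph H0 H1 ReJ b]
  define P where "P = fps_const (of_real (1 / (1 - \<beta>))) * (JQ \<tau> lam \<gamma> H - fps_const (of_real \<beta>))"
  have "cmod (P $ (2*m)) \<le> 2"
  proof (rule carath2[OF S(1,2) S(3)[folded P_def] _ m])
    show "P $ 0 = 1" using S(4) by (simp add: P_def)
    show "P $ j = 0" if "1 \<le> j" "j < 2*m" "j \<noteq> m" for j
      using S(5)[of j] vz[of j] that by (simp add: P_def)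
  qed
  then have "cmod (of_real (1 / (1 - \<beta>)) * (of_real (cc lam \<gamma> (2*m)) * H $ (Suc (2*m)) / \<tau>)) \<le> 2"
    using S(5)[of "2*m"] m by (simp add: P_def)
  then show ?thesis using b by (rule scale_bound)
qed





definition Fser :: "nat \<Rightarrow> (nat \<Rightarrow> complex) \<Rightarrow> complex fps" where
  "Fser m a = Abs_fps (\<lambda>n. if n = 1 then 1 else if m + 1 \<le> n \<and> (n - 1) mod m = 0 then a n else 0)"

lemma f_expansion:
  assumes m: "m \<ge> 1" and mf: "mfold_expansion m a f"
  shows "f has_fps_expansion Fser m a"
proof (rule has_fps_expansionI)
  have ev: "eventually (\<lambda>u. u \<in> ball (0::complex) 1) (nhds 0)"
    by (intro eventually_nhds_in_open) auto
  show "\<forall>\<^sub>F u in nhds 0. (\<lambda>n. Fser m a $ n * u ^ n) sums f u"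
    using ev
  proof eventually_elim
    case (elim u)
    define T where "T = (\<lambda>n. (if m + 1 \<le> n \<and> (n - 1) mod m = 0 then a n else 0) * u ^ n)"
    define \<phi> where "\<phi> = (\<lambda>k. m * Suc k + 1)"
    have sm: "strict_mono \<phi>" unfolding \<phi>_def using m by (intro strict_monoI) auto
    have "(\<lambda>k. T (\<phi> k)) = (\<lambda>k. a (m * Suc k + 1) * u ^ (m * Suc k + 1))"
      using m by (auto simp: T_def \<phi>_def fun_eq_iff)
    moreover have "(\<lambda>k. a (m * Suc k + 1) * u ^ (m * Suc k + 1)) sums (f u - u)"
      using mf elim by (auto simp: mfold_expansion_def)
    ultimately have "(\<lambda>k. T (\<phi> k)) sums (f u - u)" by simp
    moreover have "T n = 0" if "n \<notin> range \<phi>" for n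
    proof (rule ccontr)
      assume "T n \<noteq> 0"
      then have n1: "m + 1 \<le> n" and n2: "(n - 1) mod m = 0" by (auto simp: T_def split: if_splits)
      then obtain q where q: "n - 1 = m * q" by auto
      have "q \<ge> 1" using n1 q m by (cases q) auto
      then have "n = \<phi> (q - 1)" using q n1 by (cases q) (auto simp: \<phi>_def)
      with that show False by auto
    qed
    ultimately have sT: "T sums (f u - u)" using sums_mono_reindex[OF sm] by blast
    have s1: "(\<lambda>n. if n = 1 then u else 0) sums u"
      using sums_single[of 1 "\<lambda>_. u"] by simp
    have "(\<lambda>n. T n + (if n = 1 then u else 0)) sums (f u - u + u)"
      by (rule sums_add[OF sT s1])
    moreover have "(\<lambda>n. T n + (if n = 1 then u else 0)) = (\<lambda>n. Fser m a $ n * u ^ n)"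
      using m by (auto simp: T_def Fser_def fun_eq_iff)
    ultimately show ?case by simp
  qed
qed

lemma Fser_nth:
  assumes m: "m \<ge> 1" and j: "j < 2 * m + 2"
  shows "Fser m a $ j = (fps_X + fps_const (a (m+1)) * fps_X^(m+1) + fps_const (a (2*m+1)) * fps_X^(2*m+1)) $ j"
proof -
  consider "j = 0" | "j = 1" | "j = m + 1" | "j = 2*m+1" | "j \<noteq> 0" "j \<noteq> 1" "j \<noteq> m + 1" "j \<noteq> 2*m+1" by blast
  then show ?thesis
  proof cases
    case 4
    have "(2 * m) mod m = 0" by simp
    then show ?thesis using 4 m by (simp add: Fser_def fps_X_power_iff)
  next
    case 5
    have "\<not> (m + 1 \<le> j \<and> (j - 1) mod m = 0)"
    proof
      assume h: "m + 1 \<le> j \<and> (j - 1) mod m = 0"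
      then obtain q where q: "j - 1 = m * q" by auto
      have "m * q \<le> m * 2" using q j by linarith
      then have "q \<le> 2" using m by simp
      then have "q = 0 \<or> q = 1 \<or> q = 2" by auto
      then show False using q h 5 by auto
    qed
    then show ?thesis using 5 m by (auto simp: Fser_def fps_X_power_iff)
  qed (use m in \<open>auto simp: Fser_def fps_X_power_iff\<close>)
qed

lemma cc_eq: "cc lam \<gamma> j = 1 + real j * (lam + \<gamma>) + lam * \<gamma> * ((real j + 1)^2 + 1)"
  by (simp add: cc_def algebra_simps power2_eq_square)

lemma cc_pos: "lam \<ge> 0 \<Longrightarrow> \<gamma> \<ge> 0 \<Longrightarrow> cc lam \<gamma> j \<ge> 1"
  unfolding cc_eq by (simp add: add_nonneg_nonneg)

lemma norm_helper:
  fixes x \<tau> :: complex and c B :: real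
  assumes "c > 0" "\<tau> \<noteq> 0" "cmod (of_real c * x / \<tau>) \<le> B"
  shows "cmod x \<le> B * cmod \<tau> / c"
proof -
  have "cmod (of_real c * x / \<tau>) = c * cmod x / cmod \<tau>"
    using assms(1) by (simp add: norm_mult norm_divide)
  then have "c * cmod x / cmod \<tau> \<le> B" using assms(3) by simp
  then have "c * cmod x \<le> B * cmod \<tau>" using assms(2) by (simp add: divide_le_eq)
  then show ?thesis using assms(1) by (simp add: le_divide_eq mult.commute)
qed

theorem corollary1:
  fixes m :: nat and \<tau> :: complex and lam \<gamma> \<beta> :: real
    and f :: "complex \<Rightarrow> complex" and a :: "nat \<Rightarrow> complex"
  assumes "m \<ge> 1" and "lam \<ge> 0" and "0 \<le> \<gamma>" and "\<gamma> \<le> 1"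
    and "0 \<le> \<beta>" and "\<beta> < 1" and "\<tau> \<noteq> 0"
    and "mfold_expansion m a f"
    and "Theta m \<tau> lam \<gamma> 0 \<beta> f"
  shows "cmod (a (m + 1)) \<le>
           min (2 * cmod \<tau> * (1 - \<beta>) / (1 + m * (lam + \<gamma>) + lam * \<gamma> * ((m + 1)^2 + 1)))
               (2 * sqrt (cmod \<tau> * (1 - \<beta>) /
                  ((m + 1) * (1 + 2 * m * (lam + \<gamma>) + lam * \<gamma> * ((2 * m + 1)^2 + 1))))) \<and>
         cmod (a (2 * m + 1)) \<le>
           2 * cmod \<tau> * (1 - \<beta>) / (1 + 2 * m * (lam + \<gamma>) + lam * \<gamma> * ((2 * m + 1)^2 + 1))"
proof -
  note m = assms(1)
  note b = assms(6)
  from assms(9) obtain g where holf: "f holomorphic_on ball 0 1" and ie: "inverse_extension f g"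
     and ReF: "\<forall>z\<in>ball 0 1. Re (J_fun m \<tau> lam \<gamma> 0 f z) > \<beta>"
     and ReG: "\<forall>w\<in>ball 0 1. Re (J_fun m \<tau> lam \<gamma> 0 g w) > \<beta>"
    by (auto simp: Theta_def class_A_def)
  have holg: "g holomorphic_on ball 0 1" and gf: "\<forall>z\<in>ball 0 1. f z \<in> ball 0 1 \<longrightarrow> g (f z) = z"
    using ie by (auto simp: inverse_extension_def)
  define F where "F = Fser m a"
  define a1 where "a1 = a (m + 1)"
  define a2 where "a2 = a (2 * m + 1)"
  have fexp: "f has_fps_expansion F" unfolding F_def by (rule f_expansion[OF m assms(8)])
  have FR: "lowvan (F - (fps_X + fps_const a1 * fps_X^(m+1) + fps_const a2 * fps_X^(2*m+1))) (2*m+2)"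
    using Fser_nth[OF m] unfolding lowvan_def F_def a1_def a2_def by simp
  have F0: "F $ 0 = 0" and F1: "F $ 1 = 1" by (simp_all add: F_def Fser_def)
  have Fm1: "F $ Suc m = a1" using m by (simp add: F_def Fser_def a1_def)
  have F2m1: "F $ Suc (2*m) = a2" using m by (simp add: F_def Fser_def a2_def)
  have Fz: "F $ j = 0" if "2 \<le> j" "j \<le> 2*m" "j \<noteq> m + 1" for j
    using Fser_nth[OF m, of j a] that by (auto simp: F_def fps_X_power_iff)
  have "g analytic_on ball 0 1" using holg by (simp add: analytic_on_open)
  then have "g analytic_on {0}" by (rule analytic_on_subset) auto
  define G where "G = fps_expansion g 0"
  have gexp: "g has_fps_expansion G" unfolding G_def
    by (rule analytic_at_imp_has_fps_expansion_0) fact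
  have f0: "f 0 = 0" using has_fps_expansion_imp_0_eq_fps_nth_0[OF fexp] F0 by simp
  have g0: "g 0 = 0"
  proof -
    have "(0::complex) \<in> ball 0 1" by simp
    then have "f 0 \<in> ball 0 1 \<longrightarrow> g (f 0) = 0" using gf by blast
    then show ?thesis using f0 by simp
  qed
  have G0: "G $ 0 = 0" using has_fps_expansion_imp_0_eq_fps_nth_0[OF gexp] g0 by simp
  have comp: "(g \<circ> f) has_fps_expansion (G oo F)"
    by (rule has_fps_expansion_compose[OF gexp fexp F0])
  have ev: "eventually (\<lambda>z. (g \<circ> f) z = z) (nhds 0)"
  proof -
    define S where "S = ball 0 1 \<inter> f -` ball 0 1"
    have "open S" unfolding S_def
      by (rule continuous_open_preimage[OF holomorphic_on_imp_continuous_on[OF holf]]) auto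
    moreover have "0 \<in> S" using f0 by (simp add: S_def)
    ultimately have "eventually (\<lambda>z. z \<in> S) (nhds 0)" by (rule eventually_nhds_in_open)
    then show ?thesis by eventually_elim (use gf in \<open>auto simp: S_def\<close>)
  qed
  have GF: "G oo F = fps_X"
  proof (rule eval_fps_eqD)
    show "fps_conv_radius (G oo F) > 0" using comp by (simp add: has_fps_expansion_def)
    show "fps_conv_radius (fps_X :: complex fps) > 0" by simp
    have "eventually (\<lambda>z. eval_fps (G oo F) z = (g \<circ> f) z) (nhds 0)"
      using comp by (simp add: has_fps_expansion_def)
    then show "eventually (\<lambda>z. eval_fps (G oo F) z = eval_fps fps_X z) (nhds 0)"
      using ev by eventually_elim simp
  qed
  have GR: "lowvan (G - (fps_X - fps_const a1 * fps_X^(m+1)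
            + fps_const (of_nat (m+1) * a1^2 - a2) * fps_X^(2*m+1))) (2*m+2)"
    by (rule inverse_coeffs[OF m GF F0 FR])
  have Gc: "G $ j = (fps_X - fps_const a1 * fps_X^(m+1)
            + fps_const (of_nat (m+1) * a1^2 - a2) * fps_X^(2*m+1)) $ j" if "j < 2*m+2" for j
    using GR that unfolding lowvan_def by simp
  have G1: "G $ 1 = 1" using Gc[of 1] m by (simp add: fps_X_power_iff)
  have G2m1: "G $ Suc (2*m) = of_nat (m+1) * a1^2 - a2" using Gc[of "Suc (2*m)"] m by (simp add: fps_X_power_iff)
  have Gz: "G $ j = 0" if "2 \<le> j" "j \<le> 2*m" "j \<noteq> m + 1" for j
    using Gc[of j] that by (auto simp: fps_X_power_iff)
  define c1 where "c1 = cc lam \<gamma> m"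
  define c2 where "c2 = cc lam \<gamma> (2*m)"
  have c1p: "c1 \<ge> 1" unfolding c1_def using assms(2,3) by (rule cc_pos)
  have c2p: "c2 \<ge> 1" unfolding c2_def using assms(2,3) by (rule cc_pos)
  have B1: "cmod (of_real c1 * a1 / \<tau>) \<le> 2 * (1 - \<beta>)"
    unfolding c1_def
    using K1[OF holf fexp F0 F1 ReF b m] Fz Fm1 by simp
  have B2: "cmod (of_real c2 * a2 / \<tau>) \<le> 2 * (1 - \<beta>)"
    unfolding c2_def
    using K2[OF holf fexp F0 F1 ReF b m] Fz F2m1 by simp
  have B3: "cmod (of_real c2 * (of_nat (m+1) * a1^2 - a2) / \<tau>) \<le> 2 * (1 - \<beta>)"
    unfolding c2_def
    using K2[OF holg gexp G0 G1 ReG b m] Gz G2m1 by simp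
  have "cmod (of_real c2 * a2 / \<tau> + of_real c2 * (of_nat (m+1) * a1^2 - a2) / \<tau>) \<le> 4 * (1 - \<beta>)"
    using norm_triangle_le[OF add_mono[OF B2 B3]] by simp
  moreover have "of_real c2 * a2 / \<tau> + of_real c2 * (of_nat (m+1) * a1^2 - a2) / \<tau>
      = of_real (c2 * real (m+1)) * a1^2 / \<tau>"
    by (simp add: add_divide_distrib[symmetric] algebra_simps)
  ultimately have "cmod (of_real (c2 * real (m+1)) * a1^2 / \<tau>) \<le> 4 * (1 - \<beta>)" by simp
  then have sq: "cmod (a1^2) \<le> 4 * (1 - \<beta>) * cmod \<tau> / (c2 * real (m+1))"
    using c2p assms(7) by (intro norm_helper) auto
  have r1: "cmod a1 \<le> 2 * (1 - \<beta>) * cmod \<tau> / c1"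
    using c1p assms(7) B1 by (intro norm_helper) auto
  have r2: "cmod a2 \<le> 2 * (1 - \<beta>) * cmod \<tau> / c2"
    using c2p assms(7) B2 by (intro norm_helper) auto
  have r3: "cmod a1 \<le> 2 * sqrt (cmod \<tau> * (1 - \<beta>) / (real (m+1) * c2))"
  proof -
    have "cmod a1 = sqrt (cmod (a1^2))" by (simp add: norm_power)
    also have "\<dots> \<le> sqrt (4 * (1 - \<beta>) * cmod \<tau> / (c2 * real (m+1)))"
      using sq by (rule real_sqrt_le_mono)
    also have "4 * (1 - \<beta>) * cmod \<tau> / (c2 * real (m+1)) = 2^2 * (cmod \<tau> * (1 - \<beta>) / (real (m+1) * c2))"
      by (simp add: field_simps)
    also have "sqrt \<dots> = 2 * sqrt (cmod \<tau> * (1 - \<beta>) / (real (m+1) * c2))"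
      by (simp only: real_sqrt_mult real_sqrt_abs abs_numeral)
    finally show ?thesis .
  qed
  have e1: "c1 = 1 + m * (lam + \<gamma>) + lam * \<gamma> * ((m + 1)^2 + 1)"
    by (simp add: c1_def cc_eq)
  have e2: "c2 = 1 + 2 * m * (lam + \<gamma>) + lam * \<gamma> * ((2 * m + 1)^2 + 1)"
    by (simp add: c2_def cc_eq)
  show ?thesis
    using r1 r2 r3 unfolding e1[symmetric] e2[symmetric] a1_def[symmetric] a2_def[symmetric]
    by (simp add: mult.commute mult.left_commute)
qed

end
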